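(* Let $N_p\ge1$ be an integer and $F,G\in\mathbb{C}$ with $|G|<1$ and $|G-F|<1/N_p$. Define the $(N_p+1)\times(N_p+1)$ lower bidiagonal matrices $\mathbf{M}_F$, $\mathbf{M}_G$ with all diagonal entries $1$, subdiagonal entries $-F$ (respectively $-G$), and all other entries zero, and let $\mathbf{E}=\mathbf{I}-\mathbf{M}_G^{-1}\mathbf{M}_F$. Then $\|\mathbf{E}\|_\infty<1$; consequently the Parareal error iteration $\mathbf{e}^{k}=\mathbf{E}\mathbf{e}^{k-1}$ satisfies $\|\mathbf{e}^{k}\|_\infty<\|\mathbf{e}^{k-1}\|_\infty$ whenever $\mathbf{e}^{k-1}\neq 0$.
   Context: $\mathbf{E}$ is the error-propagation matrix of the Parareal iteration applied to a scalar linear ODE, where $F$ and $G$ are the complex amplification factors of the fine and coarse propagators over one processor interval and $N_p$ is the number of processors. $\|\cdot\|_\infty$ denotes the vector $\infty$-norm and its induced matrix norm. *)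

theory Defs
  imports Complex_Main "Jordan_Normal_Form.Gauss_Jordan_Elimination"
begin

definition bidiag :: "nat \<Rightarrow> complex \<Rightarrow> complex mat" where
  "bidiag n a = mat (n+1) (n+1)
     (\<lambda>(i,j). if i = j then 1 else if i = j + 1 then - a else 0)"

definition parareal_E :: "nat \<Rightarrow> complex \<Rightarrow> complex \<Rightarrow> complex mat" where
  "parareal_E n F G = 1\<^sub>m (n+1) - the (mat_inverse (bidiag n G)) * bidiag n F"

definition vec_inf_norm :: "complex vec \<Rightarrow> real" where
  "vec_inf_norm v = Max (insert 0 {cmod (v $ i) | i. i < dim_vec v})"

definition mat_inf_norm :: "complex mat \<Rightarrow> real" where
  "mat_inf_norm A = Sup {vec_inf_norm (A *\<^sub>v v) / vec_inf_norm v | v.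
       v \<in> carrier_vec (dim_col A) \<and> v \<noteq> 0\<^sub>v (dim_col A)}"

end

theory Submission imports Defs "Jordan_Normal_Form.Determinant" begin

lemma bidiag_carrier: "bidiag n a \<in> carrier_mat (n+1) (n+1)"
  unfolding bidiag_def by auto

lemma bidiag_mult:
  assumes X: "X \<in> carrier_mat (n+1) m" and i: "i < n+1" and j: "j < m"
  shows "(bidiag n a * X) $$ (i,j) = X $$ (i,j) - (if i > 0 then a * X $$ (i-1,j) else 0)"
proof -
  have "(bidiag n a * X) $$ (i,j) = (\<Sum>k\<in>{0..<n+1}. (if i = k then 1 else if i = k + 1 then - a else 0) * X $$ (k,j))"
    using X i j unfolding bidiag_def by (auto simp: scalar_prod_def)
  also have "\<dots> = (\<Sum>k\<in>{0..<n+1}. (if k = i then X $$ (k,j) else 0) + (if k + 1 = i then - a * X $$ (k,j) else 0))"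
    by (rule sum.cong) auto
  also have "\<dots> = X $$ (i,j) - (if i > 0 then a * X $$ (i-1,j) else 0)"
  proof (cases "i > 0")
    case True
    have "(\<Sum>k\<in>{0..<n+1}. (if k + 1 = i then - a * X $$ (k,j) else 0)) = (\<Sum>k\<in>{0..<n+1}. (if k = i - 1 then - a * X $$ (k,j) else 0))"
      by (rule sum.cong) (use True in auto)
    then show ?thesis using True i unfolding sum.distrib sum.delta' by auto
  next
    case False
    then show ?thesis using i unfolding sum.distrib sum.delta' by auto
  qed
  finally show ?thesis .
qed

definition Xm :: "nat \<Rightarrow> complex \<Rightarrow> complex \<Rightarrow> complex mat" where
  "Xm n F G = mat (n+1) (n+1) (\<lambda>(i,j). if i = j then 1 else if j < i then (G - F) * G^(i-j-1) else 0)"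

lemma Xm_carrier: "Xm n F G \<in> carrier_mat (n+1) (n+1)" unfolding Xm_def by auto

lemma bidiag_Xm: "bidiag n G * Xm n F G = bidiag n F"
proof (rule eq_matI)
  fix i j assume i: "i < dim_row (bidiag n F)" and j: "j < dim_col (bidiag n F)"
  hence i': "i < n+1" and j': "j < n+1" by (auto simp: bidiag_def)
  have eq: "(bidiag n G * Xm n F G) $$ (i,j) = Xm n F G $$ (i,j) - (if i > 0 then G * Xm n F G $$ (i-1,j) else 0)"
    by (rule bidiag_mult[OF Xm_carrier i' j'])
  show "(bidiag n G * Xm n F G) $$ (i,j) = bidiag n F $$ (i,j)"
  proof (cases "i > 0")
    case False thus ?thesis unfolding eq using i' j' by (auto simp: Xm_def bidiag_def)
  next
    case True
    consider "j < i - 1" | "j = i - 1" | "j = i" | "j > i" by linarith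
    thus ?thesis
    proof cases
      case 1
      then obtain t where t: "i - j - 1 = Suc t" "i - 1 - j - 1 = t" by (metis Suc_diff_Suc diff_Suc_1 diff_commute)
      show ?thesis unfolding eq using i' j' True 1 t by (auto simp: Xm_def bidiag_def algebra_simps)
    qed (unfold eq, use i' j' True in \<open>auto simp: Xm_def bidiag_def\<close>)
  qed
qed (auto simp: bidiag_def Xm_def)

lemma E_eq: "parareal_E n F G = 1\<^sub>m (n+1) - Xm n F G"
proof -
  have A: "bidiag n G \<in> carrier_mat (n+1) (n+1)" by (rule bidiag_carrier)
  have "det (bidiag n G) = prod_list (diag_mat (bidiag n G))"
    by (rule det_lower_triangular[OF _ A]) (auto simp: bidiag_def)
  also have "\<dots> = 1" unfolding prod_list_diag_prod by (simp add: bidiag_def)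
  finally have "det (bidiag n G) \<noteq> 0" by simp
  from det_non_zero_imp_unit[OF A this, of undefined] mat_inverse(1)[OF A, of undefined]
  obtain B where B: "mat_inverse (bidiag n G) = Some B" by fastforce
  from mat_inverse(2)[OF A B] have BA: "B * bidiag n G = 1\<^sub>m (n+1)" and Bc: "B \<in> carrier_mat (n+1) (n+1)" by auto
  have "B * bidiag n F = B * (bidiag n G * Xm n F G)" by (simp add: bidiag_Xm)
  also have "\<dots> = (B * bidiag n G) * Xm n F G" using Bc A Xm_carrier by (metis assoc_mult_mat)
  also have "\<dots> = Xm n F G" using BA left_mult_one_mat[OF Xm_carrier] by simp
  finally show ?thesis unfolding parareal_E_def B by simp
qed

lemma E_entry: "i < n+1 \<Longrightarrow> j < n+1 \<Longrightarrow> cmod (parareal_E n F G $$ (i,j)) \<le> (if j < i then cmod (G - F) else 0)" 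
  if "cmod G \<le> 1"
proof -
  assume i: "i < n+1" and j: "j < n+1"
  have "cmod (G^(i-j-1)) \<le> 1" using that by (simp add: norm_power power_le_one)
  hence "cmod ((G - F) * G^(i-j-1)) \<le> cmod (G - F)"
    by (simp add: norm_mult mult_left_le)
  thus ?thesis using i j unfolding E_eq by (auto simp: Xm_def)
qed

lemma vnorm_ge: "i < dim_vec v \<Longrightarrow> cmod (v $ i) \<le> vec_inf_norm v"
  unfolding vec_inf_norm_def
proof -
  assume "i < dim_vec v"
  have fin: "finite {cmod (v $ i) | i. i < dim_vec v}" by simp
  show "cmod (v $ i) \<le> Max (insert 0 {cmod (v $ i) |i. i < dim_vec v})"
    by (rule Max_ge) (use fin \<open>i < dim_vec v\<close> in auto)
qed

lemma vnorm_nonneg: "vec_inf_norm v \<ge> 0"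
  unfolding vec_inf_norm_def by (rule Max_ge) auto

lemma vnorm_le: "b \<ge> 0 \<Longrightarrow> (\<And>i. i < dim_vec v \<Longrightarrow> cmod (v $ i) \<le> b) \<Longrightarrow> vec_inf_norm v \<le> b"
  unfolding vec_inf_norm_def by (subst Max_le_iff) auto

lemma vnorm_pos: "v \<in> carrier_vec n \<Longrightarrow> v \<noteq> 0\<^sub>v n \<Longrightarrow> vec_inf_norm v > 0"
proof -
  assume v: "v \<in> carrier_vec n" "v \<noteq> 0\<^sub>v n"
  then obtain i where i: "i < n" "v $ i \<noteq> 0" by (metis eq_vecI carrier_vecD index_zero_vec(1,2))
  have "0 < cmod (v $ i)" using i by simp
  also have "\<dots> \<le> vec_inf_norm v" using i v by (intro vnorm_ge) auto
  finally show ?thesis .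
qed

lemma Ev_bound:
  assumes G: "cmod G \<le> 1" and v: "v \<in> carrier_vec (n+1)"
  shows "vec_inf_norm (parareal_E n F G *\<^sub>v v) \<le> real n * cmod (G - F) * vec_inf_norm v"
proof (rule vnorm_le)
  let ?N = "vec_inf_norm v" let ?d = "cmod (G - F)" let ?E = "parareal_E n F G"
  have Ec: "?E \<in> carrier_mat (n+1) (n+1)" unfolding E_eq Xm_def by auto
  show "0 \<le> real n * ?d * ?N" using vnorm_nonneg by simp
  fix i assume "i < dim_vec (?E *\<^sub>v v)"
  hence i: "i < n+1" using Ec by simp
  have eqv: "(?E *\<^sub>v v) $ i = (\<Sum>j\<in>{0..<n+1}. ?E $$ (i,j) * v $ j)"
    using Ec v i by (auto simp: scalar_prod_def)
  have "cmod ((?E *\<^sub>v v) $ i) \<le> (\<Sum>j\<in>{0..<n+1}. cmod (?E $$ (i,j) * v $ j))"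
    unfolding eqv by (rule norm_sum)
  also have "\<dots> \<le> (\<Sum>j\<in>{0..<n+1}. (if j < i then ?d * ?N else 0))"
  proof (rule sum_mono)
    fix j assume j: "j \<in> {0..<n+1}"
    have "cmod (?E $$ (i,j) * v $ j) = cmod (?E $$ (i,j)) * cmod (v $ j)" by (simp add: norm_mult)
    also have "\<dots> \<le> (if j < i then ?d else 0) * ?N"
      by (rule mult_mono) (use E_entry[OF G i] j v vnorm_ge[of j v] in auto)
    finally show "cmod (?E $$ (i,j) * v $ j) \<le> (if j < i then ?d * ?N else 0)" by (simp split: if_splits)
  qed
  also have "\<dots> = (\<Sum>j\<in>{0..<i}. ?d * ?N)"
  proof -
    have st: "{j\<in>{0..<n+1}. j < i} = {0..<i}" using i by auto
    have "(\<Sum>j\<in>{0..<n+1}. (if j < i then ?d * ?N else 0)) = (\<Sum>j\<in>{j\<in>{0..<n+1}. j < i}. ?d * ?N)"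
      by (rule sum.inter_filter[symmetric]) simp
    thus ?thesis unfolding st .
  qed
  also have "\<dots> = real i * ?d * ?N" by simp
  also have "\<dots> \<le> real n * ?d * ?N"
    using i vnorm_nonneg[of v] by (intro mult_right_mono) auto
  finally show "cmod ((?E *\<^sub>v v) $ i) \<le> real n * ?d * ?N" .
qed

theorem mainTheorem5:
  fixes Np :: nat and F G :: complex
  assumes "Np \<ge> 1" and "cmod G < 1" and "cmod (G - F) < 1 / real Np"
  shows "mat_inf_norm (parareal_E Np F G) < 1 \<and>
    (\<forall>e \<in> carrier_vec (Np+1). e \<noteq> 0\<^sub>v (Np+1) \<longrightarrow>
        vec_inf_norm (parareal_E Np F G *\<^sub>v e) < vec_inf_norm e)"
proof -
  let ?E = "parareal_E Np F G"
  define c where "c = real Np * cmod (G - F)"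
  have np: "real Np > 0" using assms(1) by simp
  have "real Np * cmod (G - F) < real Np * (1 / real Np)"
    by (rule mult_strict_left_mono[OF assms(3) np])
  hence c1: "c < 1" using np unfolding c_def by simp
  have G1: "cmod G \<le> 1" using assms by simp
  have Ec: "?E \<in> carrier_mat (Np+1) (Np+1)" unfolding E_eq Xm_def by auto
  have ratio: "vec_inf_norm (?E *\<^sub>v v) / vec_inf_norm v \<le> c"
    if v: "v \<in> carrier_vec (Np+1)" "v \<noteq> 0\<^sub>v (Np+1)" for v
  proof -
    have p: "vec_inf_norm v > 0" by (rule vnorm_pos[OF v])
    have "vec_inf_norm (?E *\<^sub>v v) \<le> c * vec_inf_norm v" using Ev_bound[OF G1 v(1)] unfolding c_def by simp
    thus ?thesis by (subst pos_divide_le_eq[OF p])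
  qed
  have part2: "vec_inf_norm (?E *\<^sub>v e) < vec_inf_norm e"
    if e: "e \<in> carrier_vec (Np+1)" "e \<noteq> 0\<^sub>v (Np+1)" for e
  proof -
    have p: "vec_inf_norm e > 0" by (rule vnorm_pos[OF e])
    have "vec_inf_norm (?E *\<^sub>v e) \<le> c * vec_inf_norm e" using Ev_bound[OF G1 e(1)] unfolding c_def by simp
    also have "\<dots> < 1 * vec_inf_norm e" by (rule mult_strict_right_mono[OF c1 p])
    also have "\<dots> = vec_inf_norm e" by simp
    finally show ?thesis .
  qed
  let ?S = "{vec_inf_norm (?E *\<^sub>v v) / vec_inf_norm v | v.
       v \<in> carrier_vec (dim_col ?E) \<and> v \<noteq> 0\<^sub>v (dim_col ?E)}"
  have dc: "dim_col ?E = Np + 1" using Ec by simp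
  define u :: "complex vec" where "u = unit_vec (Np+1) 0"
  have u1: "u \<in> carrier_vec (Np+1)" unfolding u_def by (rule unit_vec_carrier)
  have u0: "u $ 0 = 1" unfolding u_def by (simp only: index_unit_vec(1)[of 0 "Np+1"]) simp
  have u2: "u \<noteq> 0\<^sub>v (Np+1)"
  proof
    assume "u = 0\<^sub>v (Np+1)"
    hence "u $ 0 = 0" by (simp only: index_zero_vec(1)[of 0 "Np+1"])
    thus False using u0 by simp
  qed
  have ne: "?S \<noteq> {}" using u1 u2 unfolding dc by blast
  have "Sup ?S \<le> c"
  proof (rule cSup_least[OF ne])
    fix x assume "x \<in> ?S"
    then obtain v where v: "v \<in> carrier_vec (Np+1)" "v \<noteq> 0\<^sub>v (Np+1)"
      and x: "x = vec_inf_norm (?E *\<^sub>v v) / vec_inf_norm v" unfolding dc by blast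
    show "x \<le> c" unfolding x by (rule ratio[OF v])
  qed
  hence "mat_inf_norm ?E < 1" using c1 unfolding mat_inf_norm_def by linarith
  thus ?thesis using part2 by blast
qed

end
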